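(* Let $N\ge1$, $K\ge2$ be integers with $K$ even and $N$ divisible by $K$, and let $\alpha\in[0,1)$. Put $K^*=\frac{NK}{2N+K}\left(1-\frac{\alpha}{2-\alpha}\right)$. Let $s\in S$ be a pure strategy such that the number of battlefields $k$ with $s_k>0$ is strictly less than $K^*$. Then $s$ is not used with positive probability in any Nash equilibrium of $\mathcal{B}_\alpha(N,K)$: for every Nash equilibrium $(\sigma^A,\sigma^B)$ one has $\sigma^A(s)=\sigma^B(s)=0$.
   Context: Fix integers $N\ge1$, $K\ge2$ and a real number $\alpha$. The Colonel Blotto game $\mathcal{B}_\alpha(N,K)$ is the two-player simultaneous-move game with players $A,B$, each with pure strategy set $S=\{s\in\{0,1,\ldots,N\}^K:\sum_{k=1}^K s_k=N\}$, in which the payoff of player $i$ at the pure profile $(s^i,s^{-i})$ is $\pi^i(s^i,s^{-i})=\sum_{k=1}^K\big(\mathbf 1[s^i_k>s^{-i}_k]+\tfrac{\alpha}{2}\mathbf 1[s^i_k=s^{-i}_k]\big)$. Mixed strategies are probability distributions on $S$, with expected payoffs under independent randomization; a Nash equilibrium is a mixed profile from which no unilateral deviation raises a player's expected payoff. *)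

theory Defs
  imports "HOL-Analysis.Analysis"
begin

definition blotto_S :: "nat \<Rightarrow> nat \<Rightarrow> (nat \<Rightarrow> nat) set" where
  "blotto_S N K = {s. (\<forall>k. K \<le> k \<longrightarrow> s k = 0) \<and> (\<Sum>k<K. s k) = N}"

definition blotto_payoff :: "real \<Rightarrow> nat \<Rightarrow> (nat \<Rightarrow> nat) \<Rightarrow> (nat \<Rightarrow> nat) \<Rightarrow> real" where
  "blotto_payoff \<alpha> K s t =
     (\<Sum>k<K. (if s k > t k then 1 else 0) + (if s k = t k then \<alpha> / 2 else 0))"

definition mixed_strategy :: "nat \<Rightarrow> nat \<Rightarrow> ((nat \<Rightarrow> nat) \<Rightarrow> real) \<Rightarrow> bool" where
  "mixed_strategy N K \<sigma> \<longleftrightarrow>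
     (\<forall>s. 0 \<le> \<sigma> s) \<and> (\<forall>s. s \<notin> blotto_S N K \<longrightarrow> \<sigma> s = 0) \<and>
     (\<Sum>s\<in>blotto_S N K. \<sigma> s) = 1"

definition expected_payoff ::
  "real \<Rightarrow> nat \<Rightarrow> nat \<Rightarrow> ((nat \<Rightarrow> nat) \<Rightarrow> real) \<Rightarrow> ((nat \<Rightarrow> nat) \<Rightarrow> real) \<Rightarrow> real" where
  "expected_payoff \<alpha> N K \<sigma> \<tau> =
     (\<Sum>s\<in>blotto_S N K. \<Sum>t\<in>blotto_S N K. \<sigma> s * \<tau> t * blotto_payoff \<alpha> K s t)"

definition nash_equilibrium ::
  "real \<Rightarrow> nat \<Rightarrow> nat \<Rightarrow> ((nat \<Rightarrow> nat) \<Rightarrow> real) \<Rightarrow> ((nat \<Rightarrow> nat) \<Rightarrow> real) \<Rightarrow> bool" where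
  "nash_equilibrium \<alpha> N K \<sigma>A \<sigma>B \<longleftrightarrow>
     mixed_strategy N K \<sigma>A \<and> mixed_strategy N K \<sigma>B \<and>
     (\<forall>\<rho>. mixed_strategy N K \<rho> \<longrightarrow>
        expected_payoff \<alpha> N K \<rho> \<sigma>B \<le> expected_payoff \<alpha> N K \<sigma>A \<sigma>B) \<and>
     (\<forall>\<rho>. mixed_strategy N K \<rho> \<longrightarrow>
        expected_payoff \<alpha> N K \<rho> \<sigma>A \<le> expected_payoff \<alpha> N K \<sigma>B \<sigma>A)"

end

theory Submission
  imports Defs
begin

lemma finite_S: "finite (blotto_S N K)"
proof (rule finite_subset)
  show "blotto_S N K \<subseteq> (\<lambda>xs k. if k < K then xs!k else 0) ` {xs. set xs \<subseteq> {0..N} \<and> length xs = K}"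
  proof
    fix f assume f: "f \<in> blotto_S N K"
    have le: "f k \<le> N" if "k < K" for k
    proof -
      have "f k \<le> (\<Sum>k<K. f k)" by (rule member_le_sum) (use that in auto)
      then show ?thesis using f unfolding blotto_S_def by simp
    qed
    have "f = (\<lambda>k. if k < K then (map f [0..<K])!k else 0)"
      using f unfolding blotto_S_def by (auto simp: fun_eq_iff)
    moreover have "map f [0..<K] \<in> {xs. set xs \<subseteq> {0..N} \<and> length xs = K}"
      using le by auto
    ultimately show "f \<in> (\<lambda>xs k. if k < K then xs!k else 0) ` {xs. set xs \<subseteq> {0..N} \<and> length xs = K}"
      by blast
  qed
  show "finite ((\<lambda>xs k. if k < K then xs!k else 0) ` {xs. set xs \<subseteq> {0..N} \<and> length xs = K})"
    by (intro finite_imageI finite_lists_length_eq) auto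
qed

lemma field_sum:
  fixes \<alpha> :: real
  shows "(\<Sum>x\<le>n. (if x > (y::nat) then 1 else 0) + (if x = y then \<alpha>/2 else 0))
        = (if y \<le> n then real (n - y) + \<alpha>/2 else 0)"
  by (induction n) (auto simp: Suc_le_eq le_Suc_eq)

lemma field_sum_ge:
  fixes \<alpha> :: real
  assumes "\<alpha> \<le> 2"
  shows "(\<Sum>x\<le>n. (if x > (y::nat) then 1 else 0) + (if x = y then \<alpha>/2 else 0))
        \<ge> real n + \<alpha>/2 - real y"
  using assms by (simp add: field_sum of_nat_diff)

lemma payoff_upper:
  fixes \<alpha> :: real
  assumes "0 \<le> \<alpha>" "\<alpha> \<le> 2"
  shows "blotto_payoff \<alpha> K s t \<le> real (card {k. k < K \<and> s k > 0})
          + \<alpha>/2 * (real K - real (card {k. k < K \<and> s k > 0}))"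
proof -
  have "blotto_payoff \<alpha> K s t \<le> (\<Sum>k<K. if s k > 0 then 1 else \<alpha>/2)"
    unfolding blotto_payoff_def using assms
    by (intro sum_mono) auto
  also have "\<dots> = real (card {k. k < K \<and> s k > 0}) + \<alpha>/2 * real (card {k. k < K \<and> \<not> s k > 0})"
    by (simp add: sum.If_cases Int_def conj_commute)
  also have "card {k. k < K \<and> \<not> s k > 0} = K - card {k. k < K \<and> s k > 0}"
  proof -
    have "{k. k < K \<and> \<not> s k > 0} = {..<K} - {k. k < K \<and> s k > 0}" by auto
    then show ?thesis using card_Diff_subset[of "{k. k < K \<and> 0 < s k}" "{..<K}"] by auto
  qed
  also have "real (K - card {k. k < K \<and> s k > 0}) = real K - real (card {k. k < K \<and> s k > 0})"
    by (rule of_nat_diff) (rule card_mono[where B="{..<K}", simplified]; auto)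
  finally show ?thesis .
qed

lemma sum_alt: "(\<Sum>k<2*h. if even k then a else (b::nat)) = h * (a + b)"
  by (induction h) auto

lemma rev_sum: "(\<Sum>j\<le>n. f (n - j)) = (\<Sum>j\<le>(n::nat). (f j :: real))"
  by (rule sum.reindex_bij_witness [where i="\<lambda>i. n - i" and j="\<lambda>i. n - i"]) auto

definition rr :: "nat \<Rightarrow> nat \<Rightarrow> nat \<Rightarrow> nat \<Rightarrow> nat" where
  "rr K c j = (\<lambda>k. if k < K then (if even k then j else 2*c - j) else 0)"

lemma rr_in_S:
  assumes "even K" "N = c * K" "j \<le> 2*c"
  shows "rr K c j \<in> blotto_S N K"
proof -
  obtain h where h: "K = 2*h" using assms(1) by blast
  have "(\<Sum>k<K. rr K c j k) = (\<Sum>k<2*h. if even k then j else 2*c - j)"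
    unfolding rr_def h by (intro sum.cong) auto
  also have "\<dots> = h * (2*c)" using assms(3) by (simp add: sum_alt)
  finally show ?thesis using assms h unfolding blotto_S_def rr_def by auto
qed

lemma rr_inj: "0 < K \<Longrightarrow> inj (rr K c)"
  unfolding inj_def rr_def by (metis even_zero)

lemma rr_avg:
  fixes \<alpha> :: real
  assumes "\<alpha> \<le> 2" "(\<Sum>k<K. t k) = N" "N = c * K"
  shows "(\<Sum>j\<le>2*c. blotto_payoff \<alpha> K (rr K c j) t) \<ge> real K * (real c + \<alpha>/2)"
proof -
  let ?g = "\<lambda>x y. (if x > (y::nat) then 1 else 0) + (if x = y then \<alpha>/2 else (0::real))"
  have "(\<Sum>j\<le>2*c. blotto_payoff \<alpha> K (rr K c j) t) = (\<Sum>k<K. \<Sum>j\<le>2*c. ?g (rr K c j k) (t k))"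
    unfolding blotto_payoff_def by (rule sum.swap)
  also have "\<dots> = (\<Sum>k<K. \<Sum>x\<le>2*c. ?g x (t k))"
  proof (rule sum.cong[OF refl])
    fix k assume "k \<in> {..<K}"
    then show "(\<Sum>j\<le>2*c. ?g (rr K c j k) (t k)) = (\<Sum>x\<le>2*c. ?g x (t k))"
      using rev_sum[of "\<lambda>x. ?g x (t k)" "2*c"] by (cases "even k") (simp_all add: rr_def)
  qed
  also have "\<dots> \<ge> (\<Sum>k<K. real (2*c) + \<alpha>/2 - real (t k))"
    by (intro sum_mono field_sum_ge assms(1))
  moreover have "(\<Sum>k<K. real (2*c) + \<alpha>/2 - real (t k)) = real K * (real c + \<alpha>/2)"
  proof -
    have "(\<Sum>k<K. real (t k)) = real N" using assms(2) by (metis of_nat_sum)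
    then show ?thesis using assms(3) by (simp add: sum_subtractf sum.distrib algebra_simps)
  qed
  ultimately show ?thesis by linarith
qed

definition FF :: "real \<Rightarrow> nat \<Rightarrow> nat \<Rightarrow> ((nat \<Rightarrow> nat) \<Rightarrow> real) \<Rightarrow> (nat \<Rightarrow> nat) \<Rightarrow> real" where
  "FF \<alpha> N K \<tau> x = (\<Sum>t\<in>blotto_S N K. \<tau> t * blotto_payoff \<alpha> K x t)"

lemma exp_FF: "expected_payoff \<alpha> N K \<sigma> \<tau> = (\<Sum>x\<in>blotto_S N K. \<sigma> x * FF \<alpha> N K \<tau> x)"
proof -
  have "\<sigma> x * \<tau> t * blotto_payoff \<alpha> K x t = \<sigma> x * (\<tau> t * blotto_payoff \<alpha> K x t)" for x t
    by (rule mult.assoc)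
  then show ?thesis
    unfolding expected_payoff_def FF_def sum_distrib_left by presburger
qed

lemma deviation:
  assumes "mixed_strategy N K \<sigma>" "mixed_strategy N K \<rho>"
    "\<forall>\<rho>'. mixed_strategy N K \<rho>' \<longrightarrow> expected_payoff \<alpha> N K \<rho>' \<tau> \<le> expected_payoff \<alpha> N K \<sigma> \<tau>"
    "s \<in> blotto_S N K" "FF \<alpha> N K \<tau> s < expected_payoff \<alpha> N K \<rho> \<tau>"
  shows "\<sigma> s = 0"
proof -
  define \<rho>' where "\<rho>' = (\<lambda>x. \<sigma> x - (if x = s then \<sigma> s else 0) + \<sigma> s * \<rho> x)"
  let ?S = "blotto_S N K"
  let ?F = "FF \<alpha> N K \<tau>"
  have fin: "finite ?S" by (rule finite_S)
  have ss: "0 \<le> \<sigma> s" using assms(1) unfolding mixed_strategy_def by auto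
  have d1: "(\<Sum>x\<in>?S. (if x = s then \<sigma> s else 0) * g x) = \<sigma> s * g s" for g :: "_ \<Rightarrow> real"
  proof -
    have "(\<Sum>x\<in>?S. (if x = s then \<sigma> s else 0) * g x) = (\<Sum>x\<in>?S. if x = s then \<sigma> s * g s else 0)"
      by (intro sum.cong) auto
    then show ?thesis using fin assms(4) by simp
  qed
  have m: "mixed_strategy N K \<rho>'"
  proof -
    have "(\<Sum>x\<in>?S. \<rho>' x) = (\<Sum>x\<in>?S. \<sigma> x) - (\<Sum>x\<in>?S. (if x = s then \<sigma> s else 0) * 1) + \<sigma> s * (\<Sum>x\<in>?S. \<rho> x)"
      unfolding \<rho>'_def by (simp add: sum.distrib sum_subtractf sum_distrib_left)
    also have "\<dots> = 1" using d1[of "\<lambda>_. 1"] assms(1,2) unfolding mixed_strategy_def by simp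
    finally show ?thesis using assms(1,2,4) unfolding mixed_strategy_def \<rho>'_def
      by (auto intro: add_nonneg_nonneg mult_nonneg_nonneg)
  qed
  have "expected_payoff \<alpha> N K \<rho>' \<tau> = (\<Sum>x\<in>?S. \<sigma> x * ?F x) - (\<Sum>x\<in>?S. (if x = s then \<sigma> s else 0) * ?F x) + \<sigma> s * (\<Sum>x\<in>?S. \<rho> x * ?F x)"
    unfolding exp_FF \<rho>'_def by (simp add: sum.distrib sum_subtractf sum_distrib_left algebra_simps)
  also have "\<dots> = expected_payoff \<alpha> N K \<sigma> \<tau> + \<sigma> s * (expected_payoff \<alpha> N K \<rho> \<tau> - ?F s)"
    unfolding exp_FF d1 by (simp add: algebra_simps)
  finally have "\<sigma> s * (expected_payoff \<alpha> N K \<rho> \<tau> - ?F s) \<le> 0"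
    using assms(3) m by auto
  moreover have "expected_payoff \<alpha> N K \<rho> \<tau> - ?F s > 0" using assms(5) by simp
  ultimately have "\<sigma> s \<le> 0" by (simp add: mult_le_0_iff)
  then show ?thesis using ss by simp
qed

lemma good_rho:
  fixes \<alpha> :: real
  assumes "0 < K" "even K" "N = c * K" "mixed_strategy N K \<tau>" "\<alpha> \<le> 2"
  defines "R \<equiv> rr K c ` {..2*c}"
  defines "\<rho> \<equiv> (\<lambda>x. if x \<in> R then 1 / real (2*c+1) else 0)"
  shows "mixed_strategy N K \<rho> \<and>
         expected_payoff \<alpha> N K \<rho> \<tau> \<ge> real K * (real c + \<alpha>/2) / real (2*c+1)"
proof -
  let ?S = "blotto_S N K"
  have RS: "R \<subseteq> ?S" unfolding R_def using rr_in_S[OF assms(2,3)] by auto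
  have inj: "inj_on (rr K c) {..2*c}" using rr_inj[OF assms(1)] by (simp add: inj_on_def inj_def)
  have cardR: "card R = 2*c+1" unfolding R_def using card_image[OF inj] by simp
  have sumR: "(\<Sum>x\<in>?S. \<rho> x * g x) = (\<Sum>x\<in>R. g x) / real (2*c+1)" for g :: "_ \<Rightarrow> real"
  proof -
    have "(\<Sum>x\<in>?S. \<rho> x * g x) = (\<Sum>x\<in>?S. if x \<in> R then g x / real (2*c+1) else 0)"
      unfolding \<rho>_def by (intro sum.cong) auto
    also have "\<dots> = (\<Sum>x\<in>R. g x / real (2*c+1))"
      using finite_S RS by (simp add: sum.If_cases Int_absorb1 Int_absorb2 Int_commute)
    finally show ?thesis by (simp add: sum_divide_distrib)
  qed
  have mix: "mixed_strategy N K \<rho>"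
  proof -
    have "(\<Sum>x\<in>?S. \<rho> x) = 1" using sumR[of "\<lambda>_. 1"] cardR by simp
    then show ?thesis using RS unfolding mixed_strategy_def \<rho>_def by auto
  qed
  have e1: "expected_payoff \<alpha> N K \<rho> \<tau> = (\<Sum>x\<in>R. FF \<alpha> N K \<tau> x) / real (2*c+1)"
    unfolding exp_FF by (rule sumR)
  have "(\<Sum>x\<in>R. FF \<alpha> N K \<tau> x) = (\<Sum>j\<le>2*c. FF \<alpha> N K \<tau> (rr K c j))"
    unfolding R_def by (rule sum.reindex[OF inj, unfolded comp_def])
  also have "\<dots> = (\<Sum>t\<in>?S. \<tau> t * (\<Sum>j\<le>2*c. blotto_payoff \<alpha> K (rr K c j) t))"
    unfolding FF_def by (simp add: sum_distrib_left) (rule sum.swap)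
  finally have e2: "(\<Sum>x\<in>R. FF \<alpha> N K \<tau> x) = (\<Sum>t\<in>?S. \<tau> t * (\<Sum>j\<le>2*c. blotto_payoff \<alpha> K (rr K c j) t))" .
  have e3: "(\<Sum>t\<in>?S. \<tau> t * (real K * (real c + \<alpha>/2))) \<le> (\<Sum>t\<in>?S. \<tau> t * (\<Sum>j\<le>2*c. blotto_payoff \<alpha> K (rr K c j) t))"
  proof (rule sum_mono)
    fix t assume "t \<in> ?S"
    then have "(\<Sum>k<K. t k) = N" unfolding blotto_S_def by auto
    then show "\<tau> t * (real K * (real c + \<alpha>/2)) \<le> \<tau> t * (\<Sum>j\<le>2*c. blotto_payoff \<alpha> K (rr K c j) t)"
      using rr_avg[OF assms(5) _ assms(3)] assms(4) unfolding mixed_strategy_def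
      by (intro mult_left_mono) auto
  qed
  have e4: "(\<Sum>t\<in>?S. \<tau> t * (real K * (real c + \<alpha>/2))) = real K * (real c + \<alpha>/2)"
    using assms(4) unfolding mixed_strategy_def by (simp add: sum_distrib_right[symmetric])
  have "real K * (real c + \<alpha>/2) \<le> (\<Sum>x\<in>R. FF \<alpha> N K \<tau> x)" using e2 e3 e4 by simp
  then have "real K * (real c + \<alpha>/2) / real (2*c+1) \<le> expected_payoff \<alpha> N K \<rho> \<tau>"
    unfolding e1 by (rule divide_right_mono) simp
  then show ?thesis using mix by simp
qed

lemma FF_upper:
  fixes \<alpha> :: real
  assumes "0 \<le> \<alpha>" "\<alpha> \<le> 2" "mixed_strategy N K \<tau>"
  shows "FF \<alpha> N K \<tau> s \<le> real (card {k. k < K \<and> s k > 0})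
          + \<alpha>/2 * (real K - real (card {k. k < K \<and> s k > 0}))"
proof -
  let ?B = "real (card {k. k < K \<and> s k > 0}) + \<alpha>/2 * (real K - real (card {k. k < K \<and> s k > 0}))"
  have "FF \<alpha> N K \<tau> s \<le> (\<Sum>t\<in>blotto_S N K. \<tau> t * ?B)"
    unfolding FF_def using assms payoff_upper unfolding mixed_strategy_def
    by (intro sum_mono mult_left_mono) auto
  also have "\<dots> = ?B" using assms(3) unfolding mixed_strategy_def by (simp add: sum_distrib_right[symmetric])
  finally show ?thesis .
qed

lemma lin_aux: "(P::real) < M \<Longrightarrow> 2*L = P+Q \<Longrightarrow> 2*R = M+Q \<Longrightarrow> L < R"
  by linarith

lemma arith_key:
  fixes x k cc a :: real
  assumes "k > 0" "cc \<ge> 0" "0 \<le> a" "a < 1"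
    and "x < (cc*k*k) / (2*(cc*k) + k) * (1 - a/(2-a))"
  shows "x + a/2 * (k - x) < k * (cc + a/2) / (2*cc+1)"
proof -
  have "(cc*k*k) / (2*(cc*k) + k) = cc*k/(2*cc+1)"
  proof -
    have d: "2*(cc*k) + k = (2*cc+1)*k" by (simp add: algebra_simps)
    have "2*cc+1 > 0" using assms(2) by simp
    then show ?thesis unfolding d using assms(1) by simp
  qed
  moreover have "1 - a/(2-a) = (2-2*a)/(2-a)" using assms(4) by (simp add: field_simps)
  ultimately have "x < cc*k/(2*cc+1) * ((2-2*a)/(2-a))" using assms(5) by simp
  then have "x * (2-a) < cc*k/(2*cc+1) * ((2-2*a)/(2-a)) * (2-a)"
    using assms(4) by (intro mult_strict_right_mono) auto
  also have "cc*k/(2*cc+1) * ((2-2*a)/(2-a)) * (2-a) = cc*k*(2-2*a)/(2*cc+1)"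
    using assms(4) by simp
  finally have "x * (2-a) < cc*k*(2-2*a)/(2*cc+1)" .
  then have "x * (2-a) * (2*cc+1) < cc*k*(2-2*a)"
    using assms(2) by (simp add: field_simps)
  moreover have "2*((x + a/2 * (k - x)) * (2*cc+1)) = x*(2-a)*(2*cc+1) + a*k*(2*cc+1)"
  proof -
    have h: "2*(a/2 * (k - x)) = a*k - a*x" by (simp add: right_diff_distrib)
    have "2*(x + a/2 * (k - x)) = x*(2-a) + a*k"
      by (simp only: distrib_left h) (simp add: algebra_simps)
    then have "2*(x + a/2 * (k - x)) * (2*cc+1) = (x*(2-a) + a*k) * (2*cc+1)" by simp
    then show ?thesis by (simp add: algebra_simps)
  qed
  moreover have "2*(k * (cc + a/2)) = cc*k*(2-2*a) + a*k*(2*cc+1)"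
    by (simp add: algebra_simps)
  ultimately have "(x + a/2 * (k - x)) * (2*cc+1) < k * (cc + a/2)"
    by (rule lin_aux)
  then show ?thesis using assms(2) by (simp add: field_simps)
qed

theorem proposition3:
  fixes N K :: nat and \<alpha> :: real and s :: "nat \<Rightarrow> nat"
    and \<sigma>A \<sigma>B :: "(nat \<Rightarrow> nat) \<Rightarrow> real"
  assumes "N \<ge> 1" and "K \<ge> 2" and "even K" and "K dvd N"
    and "0 \<le> \<alpha>" and "\<alpha> < 1"
    and "s \<in> blotto_S N K"
    and "real (card {k. k < K \<and> s k > 0}) <
           real (N * K) / real (2 * N + K) * (1 - \<alpha> / (2 - \<alpha>))"
    and "nash_equilibrium \<alpha> N K \<sigma>A \<sigma>B"
  shows "\<sigma>A s = 0 \<and> \<sigma>B s = 0"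
proof -
  define c where "c = N div K"
  have Nc: "N = c * K" using assms(4) unfolding c_def by simp
  have K0: "0 < K" using assms(2) by simp
  let ?m = "real (card {k. k < K \<and> s k > 0})"
  have lt: "?m + \<alpha>/2 * (real K - ?m) < real K * (real c + \<alpha>/2) / real (2*c+1)"
  proof -
    have "?m < (real c * real K * real K) / (2*(real c * real K) + real K) * (1 - \<alpha>/(2-\<alpha>))"
      using assms(8) unfolding Nc by (simp add: mult.assoc)
    from arith_key[OF _ _ assms(5,6) this] K0 have
      "?m + \<alpha>/2 * (real K - ?m) < real K * (real c + \<alpha>/2) / (2*real c+1)" by simp
    then show ?thesis by (simp add: add.commute)
  qed
  have a2: "\<alpha> \<le> 2" using assms(6) by simp
  have gen: "\<sigma> s = 0" if m\<sigma>: "mixed_strategy N K \<sigma>" and m\<tau>: "mixed_strategy N K \<tau>"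
    and br: "\<forall>\<rho>'. mixed_strategy N K \<rho>' \<longrightarrow> expected_payoff \<alpha> N K \<rho>' \<tau> \<le> expected_payoff \<alpha> N K \<sigma> \<tau>"
    for \<sigma> \<tau>
  proof -
    obtain \<rho> where \<rho>: "mixed_strategy N K \<rho>"
      "expected_payoff \<alpha> N K \<rho> \<tau> \<ge> real K * (real c + \<alpha>/2) / real (2*c+1)"
      using good_rho[OF K0 assms(3) Nc m\<tau> a2] by blast
    have "FF \<alpha> N K \<tau> s < expected_payoff \<alpha> N K \<rho> \<tau>"
      using FF_upper[OF assms(5) a2 m\<tau>, of s] lt \<rho>(2) by linarith
    then show ?thesis by (rule deviation[OF m\<sigma> \<rho>(1) br assms(7)])
  qed
  show ?thesis
    using assms(9) gen unfolding nash_equilibrium_def by blast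
qed

end
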